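(* Let $R$ be a commutative ring. The following are equivalent: (1) $R$ is clean; (2) $R$ is feckly clean and $R$ is a pm ring; (3) $R$ is feckly clean and whenever $a,b\in R$ satisfy $a+b=1$ there exist $r,s\in R$ with $(1+ar)(1+bs)=0$.
   Context: Rings have identity; $J(R)$ is the Jacobson radical. A ring is clean if every element is the sum of an idempotent and a unit. An element $u\in R$ is full if $RuR=R$. An element $a\in R$ is feckly clean if there exist $e\in R$ and a full element $u\in R$ with $a=e+u$ and $eR(1-e)\subseteq J(R)$; $R$ is feckly clean if every element is feckly clean. A commutative ring is a pm ring if every prime ideal is contained in exactly one maximal ideal. *)

theory Defs
  imports Main
begin

definition cr_ideal :: "'a::comm_ring_1 set \<Rightarrow> bool" where
  "cr_ideal I \<longleftrightarrow> 0 \<in> I \<and> (\<forall>x\<in>I. \<forall>y\<in>I. x + y \<in> I) \<and> (\<forall>r. \<forall>x\<in>I. r * x \<in> I)"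

definition maximal_ideal :: "'a::comm_ring_1 set \<Rightarrow> bool" where
  "maximal_ideal M \<longleftrightarrow> cr_ideal M \<and> M \<noteq> UNIV \<and>
     (\<forall>I. cr_ideal I \<and> M \<subseteq> I \<longrightarrow> I = M \<or> I = UNIV)"

definition prime_ideal :: "'a::comm_ring_1 set \<Rightarrow> bool" where
  "prime_ideal P \<longleftrightarrow> cr_ideal P \<and> P \<noteq> UNIV \<and> (\<forall>a b. a * b \<in> P \<longrightarrow> a \<in> P \<or> b \<in> P)"

definition jacobson :: "'a::comm_ring_1 set" where
  "jacobson = \<Inter> {M. maximal_ideal M}"

definition clean_ring :: "'a::comm_ring_1 itself \<Rightarrow> bool" where
  "clean_ring _ \<longleftrightarrow> (\<forall>a::'a. \<exists>e u. e * e = e \<and> u dvd 1 \<and> a = e + u)"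

definition RuR :: "'a::comm_ring_1 \<Rightarrow> 'a set" where
  "RuR u = {x. \<exists>(n::nat) r s. x = (\<Sum>i<n. r i * u * s i)}"

definition full :: "'a::comm_ring_1 \<Rightarrow> bool" where
  "full u \<longleftrightarrow> RuR u = UNIV"

definition feckly_clean_elem :: "'a::comm_ring_1 \<Rightarrow> bool" where
  "feckly_clean_elem a \<longleftrightarrow> (\<exists>e u. full u \<and> a = e + u \<and> {e * r * (1 - e) | r. True} \<subseteq> jacobson)"

definition feckly_clean_ring :: "'a::comm_ring_1 itself \<Rightarrow> bool" where
  "feckly_clean_ring _ \<longleftrightarrow> (\<forall>a::'a. feckly_clean_elem a)"

definition pm_ring :: "'a::comm_ring_1 itself \<Rightarrow> bool" where
  "pm_ring _ \<longleftrightarrow> (\<forall>P::'a set. prime_ideal P \<longrightarrow> (\<exists>!M. maximal_ideal M \<and> P \<subseteq> M))"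

end

theory Submission
  imports Defs
begin

lemma id0: "cr_ideal I \<Longrightarrow> 0 \<in> I" by (simp add: cr_ideal_def)
lemma idadd: "cr_ideal I \<Longrightarrow> x \<in> I \<Longrightarrow> y \<in> I \<Longrightarrow> x + y \<in> I" by (simp add: cr_ideal_def)
lemma idmul: "cr_ideal I \<Longrightarrow> x \<in> I \<Longrightarrow> r * x \<in> I" by (simp add: cr_ideal_def)
lemma idmulr: "cr_ideal I \<Longrightarrow> x \<in> I \<Longrightarrow> x * r \<in> I"
  using idmul[of I x r] by (simp add: mult.commute)
lemma idneg: "cr_ideal I \<Longrightarrow> x \<in> I \<Longrightarrow> - x \<in> I"
  using idmul[of I x "-1"] by simp
lemma iddiff: "cr_ideal I \<Longrightarrow> x \<in> I \<Longrightarrow> y \<in> I \<Longrightarrow> x - y \<in> I"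
  using idadd[of I x "-y"] idneg[of I y] by simp
lemma id_one: "cr_ideal I \<Longrightarrow> 1 \<in> I \<Longrightarrow> I = UNIV"
  using idmul[of I 1] by auto

definition span2 :: "'a::comm_ring_1 set \<Rightarrow> 'a \<Rightarrow> 'a set" where
  "span2 M a = {m + a * r | m r. m \<in> M}"

lemma span2_ideal: assumes "cr_ideal M" shows "cr_ideal (span2 M a)"
  unfolding cr_ideal_def span2_def
proof (intro conjI ballI allI)
  show "0 \<in> {m + a * r |m r. m \<in> M}" using id0[OF assms] by (intro CollectI exI[of _ 0]) auto
next
  fix x y assume "x \<in> {m + a * r |m r. m \<in> M}" "y \<in> {m + a * r |m r. m \<in> M}"
  then obtain m r m' r' where "x = m + a*r" "y = m' + a*r'" "m \<in> M" "m' \<in> M" by auto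
  then show "x + y \<in> {m + a * r |m r. m \<in> M}"
    using idadd[OF assms, of m m'] by (intro CollectI exI[of _ "m+m'"] exI[of _ "r+r'"]) (auto simp: algebra_simps)
next
  fix s x assume "x \<in> {m + a * r |m r. m \<in> M}"
  then obtain m r where "x = m + a*r" "m \<in> M" by auto
  then show "s * x \<in> {m + a * r |m r. m \<in> M}"
    using idmul[OF assms, of m s] by (intro CollectI exI[of _ "s*m"] exI[of _ "s*r"]) (auto simp: algebra_simps)
qed

lemma span2_sub: "cr_ideal M \<Longrightarrow> M \<subseteq> span2 M a"
proof
  fix x assume "x \<in> M"
  moreover have "x = x + a * 0" by simp
  ultimately show "x \<in> span2 M a" unfolding span2_def by blast
qed
lemma span2_a: "cr_ideal M \<Longrightarrow> a \<in> span2 M a"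
proof -
  assume "cr_ideal M" then have "0 \<in> M" by (rule id0)
  moreover have "a = 0 + a * 1" by simp
  ultimately show ?thesis unfolding span2_def by blast
qed

lemma zorn_ideal:
  fixes I :: "'a::comm_ring_1 set"
  assumes "cr_ideal I" "I \<inter> S = {}"
  shows "\<exists>Q. cr_ideal Q \<and> I \<subseteq> Q \<and> Q \<inter> S = {} \<and>
           (\<forall>Q'. cr_ideal Q' \<and> Q \<subseteq> Q' \<and> Q' \<inter> S = {} \<longrightarrow> Q' = Q)"
proof -
  define A where "A = {Q. cr_ideal Q \<and> I \<subseteq> Q \<and> Q \<inter> S = {}}"
  have "\<forall>C\<in>chains A. \<exists>U\<in>A. \<forall>X\<in>C. X \<subseteq> U"
  proof
    fix C assume C: "C \<in> chains A"
    show "\<exists>U\<in>A. \<forall>X\<in>C. X \<subseteq> U"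
    proof (cases "C = {}")
      case True then show ?thesis using assms by (auto simp: A_def)
    next
      case False
      have CA: "C \<subseteq> A" using chainsD2[OF C] .
      have "cr_ideal (\<Union>C)" unfolding cr_ideal_def
      proof (intro conjI ballI allI)
        obtain X where "X \<in> C" using False by auto
        then show "0 \<in> \<Union>C" using CA id0[of X] by (auto simp: A_def)
      next
        fix x y assume "x \<in> \<Union>C" "y \<in> \<Union>C"
        then obtain X Y where XY: "X \<in> C" "Y \<in> C" "x \<in> X" "y \<in> Y" by auto
        from chainsD[OF C XY(1,2)] show "x + y \<in> \<Union>C"
        proof
          assume "X \<subseteq> Y" then show ?thesis using XY CA idadd[of Y x y] by (auto simp: A_def)
        next
          assume "Y \<subseteq> X" then show ?thesis using XY CA idadd[of X x y] by (auto simp: A_def)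
        qed
      next
        fix r x assume "x \<in> \<Union>C"
        then obtain X where "X \<in> C" "x \<in> X" by auto
        then show "r * x \<in> \<Union>C" using CA idmul[of X x r] by (auto simp: A_def)
      qed
      moreover have "I \<subseteq> \<Union>C" using False CA by (auto simp: A_def)
      moreover have "\<Union>C \<inter> S = {}" using CA by (auto simp: A_def)
      ultimately show ?thesis by (auto simp: A_def)
    qed
  qed
  from Zorn_Lemma2[OF this] obtain M where M: "M \<in> A" "\<forall>X\<in>A. M \<subseteq> X \<longrightarrow> X = M" by blast
  have "\<forall>Q'. cr_ideal Q' \<and> M \<subseteq> Q' \<and> Q' \<inter> S = {} \<longrightarrow> Q' = M"
  proof (intro allI impI)
    fix Q' assume "cr_ideal Q' \<and> M \<subseteq> Q' \<and> Q' \<inter> S = {}"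
    moreover have "I \<subseteq> M" using M(1) by (simp add: A_def)
    ultimately have "Q' \<in> A" by (auto simp: A_def)
    then show "Q' = M" using M(2) \<open>cr_ideal Q' \<and> M \<subseteq> Q' \<and> Q' \<inter> S = {}\<close> by blast
  qed
  then show ?thesis using M(1) by (auto simp: A_def)
qed

lemma max_one: "maximal_ideal M \<Longrightarrow> 1 \<notin> M"
  using id_one by (auto simp: maximal_ideal_def)

lemma exists_max:
  fixes I :: "'a::comm_ring_1 set"
  assumes "cr_ideal I" "1 \<notin> I" shows "\<exists>M. maximal_ideal M \<and> I \<subseteq> M"
proof -
  obtain Q where Q: "cr_ideal Q" "I \<subseteq> Q" "Q \<inter> {1} = {}"
     "\<forall>Q'. cr_ideal Q' \<and> Q \<subseteq> Q' \<and> Q' \<inter> {1} = {} \<longrightarrow> Q' = Q"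
    using zorn_ideal[OF assms(1), of "{1}"] assms(2) by auto
  have "maximal_ideal Q" unfolding maximal_ideal_def
  proof (intro conjI allI impI)
    show "cr_ideal Q" by fact
    show "Q \<noteq> UNIV" using Q(3) by auto
  next
    fix J assume J: "cr_ideal J \<and> Q \<subseteq> J"
    show "J = Q \<or> J = UNIV"
    proof (cases "1 \<in> J")
      case True then show ?thesis using id_one J by blast
    next
      case False then have "J \<inter> {1} = {}" by auto
      then show ?thesis using Q(4) J by blast
    qed
  qed
  then show ?thesis using Q by auto
qed

lemma nonunit_max:
  fixes x :: "'a::comm_ring_1"
  assumes "\<not> x dvd 1" shows "\<exists>M. maximal_ideal M \<and> x \<in> M"
proof -
  have "cr_ideal (span2 {0} x)" by (rule span2_ideal) (simp add: cr_ideal_def)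
  moreover have "1 \<notin> span2 {0} x"
  proof
    assume "1 \<in> span2 {0} x"
    then obtain r where "1 = 0 + x * r" unfolding span2_def by blast
    then have "x dvd 1" by (simp add: dvdI)
    then show False using assms by simp
  qed
  ultimately obtain M where "maximal_ideal M" "span2 {0} x \<subseteq> M" using exists_max by blast
  moreover have "x \<in> span2 {0} x" by (rule span2_a) (simp add: cr_ideal_def)
  ultimately show ?thesis by auto
qed

lemma unit_of_nomax:
  fixes x :: "'a::comm_ring_1"
  assumes "\<And>M. maximal_ideal M \<Longrightarrow> x \<notin> M" shows "x dvd 1"
  using nonunit_max assms by blast

lemma max_prime:
  assumes M: "maximal_ideal M" and ab: "a * b \<in> M" shows "a \<in> M \<or> b \<in> M"
proof (rule ccontr)
  assume n: "\<not> (a \<in> M \<or> b \<in> M)"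
  have I: "cr_ideal M" using M by (simp add: maximal_ideal_def)
  have "span2 M a = M \<or> span2 M a = UNIV"
    using M span2_ideal[OF I] span2_sub[OF I] by (simp add: maximal_ideal_def)
  then have "span2 M a = UNIV" using span2_a[OF I, of a] n by auto
  then obtain m r where mr: "1 = m + a * r" "m \<in> M" unfolding span2_def by blast
  have "b = b * (m + a * r)" using mr(1) by simp
  also have "\<dots> = b * m + (a * b) * r" by (simp add: algebra_simps)
  finally have beq: "b = b * m + (a * b) * r" .
  have "b * m + (a * b) * r \<in> M" using idadd[OF I idmul[OF I mr(2)] idmulr[OF I ab]] .
  then have "b \<in> M" using beq by simp
  then show False using n by auto
qed

lemma jac_iff: "x \<in> jacobson \<longleftrightarrow> (\<forall>M. maximal_ideal M \<longrightarrow> x \<in> M)"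
  by (auto simp: jacobson_def)

lemma max_ideal: "maximal_ideal M \<Longrightarrow> cr_ideal M" by (simp add: maximal_ideal_def)

lemma clean_F: "clean_ring TYPE('a::comm_ring_1) \<Longrightarrow> feckly_clean_ring TYPE('a)"
  unfolding feckly_clean_ring_def feckly_clean_elem_def
proof
  fix a :: 'a assume "clean_ring TYPE('a)"
  then obtain e u where eu: "e * e = e" "u dvd 1" "a = e + u" unfolding clean_ring_def by blast
  obtain v where v: "1 = u * v" using eu(2) by (auto elim: dvdE)
  have "full u" unfolding full_def RuR_def
  proof (intro set_eqI iffI)
    fix x :: 'a
    have "x = (\<Sum>i<(1::nat). (\<lambda>_. x * v) i * u * (\<lambda>_. 1) i)" using v
      by (simp add: mult.assoc mult.commute[of v u])
    then have "\<exists>(n::nat) r s. x = (\<Sum>i<n. r i * u * s i)"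
      apply -
      apply (rule exI[of _ "1::nat"])
      apply (rule exI[of _ "\<lambda>_::nat. x * v"])
      apply (rule exI[of _ "\<lambda>_::nat. 1"])
      apply assumption
      done
    then show "x \<in> {x. \<exists>(n::nat) r s. x = (\<Sum>i<n. r i * u * s i)}" by simp
  qed simp
  moreover have "{e * r * (1 - e) | r. True} \<subseteq> jacobson"
  proof
    fix x assume "x \<in> {e * r * (1 - e) | r. True}"
    then obtain r where "x = e * r * (1 - e)" by blast
    also have "\<dots> = r * (e - e * e)" by (simp add: algebra_simps)
    finally have "x = 0" using eu(1) by simp
    then show "x \<in> jacobson" by (auto simp: jac_iff dest: max_ideal id0)
  qed
  ultimately show "\<exists>e u. full u \<and> a = e + u \<and> {e * r * (1 - e) | r. True} \<subseteq> jacobson"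
    using eu(3) by blast
qed

lemma clean_star: "clean_ring TYPE('a::comm_ring_1) \<Longrightarrow>
   (\<forall>a b::'a. a + b = 1 \<longrightarrow> (\<exists>r s. (1 + a * r) * (1 + b * s) = 0))"
proof (intro allI impI)
  fix a b :: 'a assume c: "clean_ring TYPE('a)" and ab: "a + b = 1"
  then obtain e u where eu: "e * e = e" "u dvd 1" "a = e + u" unfolding clean_ring_def by blast
  obtain v where v: "1 = u * v" using eu(2) by (auto elim: dvdE)
  have 1: "1 + a * (- v * (1 - e)) = e"
  proof -
    have "a * (1 - e) = e * (1 - e) + u * (1 - e)" using eu(3) by (simp add: algebra_simps)
    moreover have "e * (1 - e) = 0" using eu(1) by (simp add: algebra_simps)
    ultimately have "a * (1 - e) = u * (1 - e)" by simp
    have "a * (- v * (1 - e)) = - (v * (a * (1 - e)))" by (simp add: mult_ac)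
    also have "\<dots> = - ((u * v) * (1 - e))" using \<open>a * (1 - e) = u * (1 - e)\<close> by (simp add: mult_ac)
    also have "\<dots> = - (1 - e)" using v by simp
    finally show ?thesis by simp
  qed
  have 2: "1 + b * (v * e) = 1 - e"
  proof -
    have b: "b = 1 - a" using ab by (metis add_diff_cancel_left')
    have "b * e = e - a * e" using b by (simp add: left_diff_distrib)
    also have "a * e = e * e + u * e" using eu(3) by (simp add: algebra_simps)
    finally have "b * e = e - e * e - u * e" by simp
    then have "b * e = - (u * e)" using eu(1) by simp
    have "b * (v * e) = v * (b * e)" by (simp add: mult_ac)
    also have "\<dots> = v * (- (u * e))" using \<open>b * e = - (u * e)\<close> by simp
    also have "\<dots> = - (u * v) * e" by (simp add: mult_ac)
    finally have "b * (v * e) = - (u * v) * e" .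
    then show ?thesis using v by simp
  qed
  have "(1 + a * (- v * (1 - e))) * (1 + b * (v * e)) = 0"
    unfolding 1 2 using eu(1) by (simp add: algebra_simps)
  then show "\<exists>r s. (1 + a * r) * (1 + b * s) = 0" by blast
qed

lemma star_pm:
  assumes st: "\<forall>a b::'a::comm_ring_1. a + b = 1 \<longrightarrow> (\<exists>r s. (1 + a * r) * (1 + b * s) = 0)"
  shows "pm_ring TYPE('a)"
  unfolding pm_ring_def
proof (intro allI impI)
  fix P :: "'a set" assume P: "prime_ideal P"
  have PI: "cr_ideal P" "1 \<notin> P" using P id_one by (auto simp: prime_ideal_def)
  obtain M where M: "maximal_ideal M" "P \<subseteq> M" using exists_max[OF PI] by blast
  show "\<exists>!M. maximal_ideal M \<and> P \<subseteq> M"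
  proof (rule ex1I[of _ M])
    show "maximal_ideal M \<and> P \<subseteq> M" using M by blast
  next
    fix M2 assume M2: "maximal_ideal M2 \<and> P \<subseteq> M2"
    show "M2 = M"
    proof (rule ccontr)
      assume ne: "M2 \<noteq> M"
      have I1: "cr_ideal M" and I2: "cr_ideal M2" using M M2 by (auto dest: max_ideal)
      have "\<not> M2 \<subseteq> M"
      proof
        assume "M2 \<subseteq> M"
        then have "M = M2 \<or> M = UNIV" using M2 I1 by (auto simp: maximal_ideal_def)
        then show False using ne M(1) max_one by blast
      qed
      then obtain y where y: "y \<in> M2" "y \<notin> M" by blast
      have "span2 M y = M \<or> span2 M y = UNIV"
        using M(1) span2_ideal[OF I1] span2_sub[OF I1] by (simp add: maximal_ideal_def)
      then have "span2 M y = UNIV" using span2_a[OF I1, of y] y by auto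
      then obtain m t where mt: "1 = m + y * t" "m \<in> M" unfolding span2_def by blast
      have b2: "y * t \<in> M2" using idmulr[OF I2 y(1)] .
      obtain r s where rs: "(1 + m * r) * (1 + (y * t) * s) = 0" using st mt(1) by metis
      have "(1 + m * r) * (1 + (y * t) * s) \<in> P" using rs id0[OF PI(1)] by simp
      then have "1 + m * r \<in> P \<or> 1 + (y * t) * s \<in> P" using P by (simp add: prime_ideal_def)
      then show False
      proof
        assume "1 + m * r \<in> P"
        then have "1 + m * r \<in> M" using M by blast
        then have "(1 + m * r) - m * r \<in> M" using iddiff[OF I1] idmulr[OF I1 mt(2)] by blast
        then show False using max_one[OF M(1)] by simp
      next
        assume "1 + (y * t) * s \<in> P"
        then have "1 + (y * t) * s \<in> M2" using M2 by blast
        then have "(1 + (y * t) * s) - (y * t) * s \<in> M2" using iddiff[OF I2] idmulr[OF I2 b2] by blast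
        then show False using max_one M2 by auto
      qed
    qed
  qed
qed

lemma pm_star:
  assumes pm: "pm_ring TYPE('a::comm_ring_1)"
  shows "\<forall>a b::'a. a + b = 1 \<longrightarrow> (\<exists>r s. (1 + a * r) * (1 + b * s) = 0)"
proof (intro allI impI)
  fix a b :: 'a assume ab: "a + b = 1"
  show "\<exists>r s. (1 + a * r) * (1 + b * s) = 0"
  proof (rule ccontr)
    assume nz: "\<not> ?thesis"
    define S where "S = {(1 + a * r) * (1 + b * s) | r s. True}"
    have Smul: "x * y \<in> S" if xyS: "x \<in> S" "y \<in> S" for x y
    proof -
      obtain r s r' s' where "x = (1 + a * r) * (1 + b * s)" "y = (1 + a * r') * (1 + b * s')"
        using xyS unfolding S_def by blast
      then have "x * y = (1 + a * (r + r' + a * r * r')) * (1 + b * (s + s' + b * s * s'))"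
        by (simp add: algebra_simps)
      then show ?thesis unfolding S_def by blast
    qed
    have S1: "(1 + a * r) \<in> S" for r
    proof -
      have "1 + a * r = (1 + a * r) * (1 + b * 0)" by simp
      then show ?thesis unfolding S_def by blast
    qed
    have S2: "(1 + b * r) \<in> S" for r
    proof -
      have "1 + b * r = (1 + a * 0) * (1 + b * r)" by simp
      then show ?thesis unfolding S_def by blast
    qed
    have z: "cr_ideal {0::'a}" by (simp add: cr_ideal_def)
    have "0 \<notin> S"
    proof
      assume "0 \<in> S"
      then obtain r s where "0 = (1 + a * r) * (1 + b * s)" unfolding S_def by blast
      then have "(1 + a * r) * (1 + b * s) = 0" by simp
      then show False using nz by blast
    qed
    then have "{0} \<inter> S = {}" by blast
    then obtain Q where Q: "cr_ideal Q" "Q \<inter> S = {}"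
        "\<forall>Q'. cr_ideal Q' \<and> Q \<subseteq> Q' \<and> Q' \<inter> S = {} \<longrightarrow> Q' = Q"
      using zorn_ideal[OF z \<open>{0} \<inter> S = {}\<close>] by blast
    have meet: "\<exists>q t. q \<in> Q \<and> q + x * t \<in> S" if "x \<notin> Q" for x
    proof (rule ccontr)
      assume "\<not> ?thesis"
      then have "span2 Q x \<inter> S = {}" unfolding span2_def by blast
      then have "span2 Q x = Q" using Q(3) span2_ideal[OF Q(1)] span2_sub[OF Q(1)] by blast
      then show False using span2_a[OF Q(1), of x] that by simp
    qed
    have "prime_ideal Q" unfolding prime_ideal_def
    proof (intro conjI allI impI)
      show "cr_ideal Q" by fact
      have "1 \<in> S" using S1[of 0] by simp
      then show "Q \<noteq> UNIV" using Q(2) by blast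
    next
      fix x y assume xy: "x * y \<in> Q"
      show "x \<in> Q \<or> y \<in> Q"
      proof (rule ccontr)
        assume "\<not> (x \<in> Q \<or> y \<in> Q)"
        then obtain q1 t1 q2 t2 where q: "q1 \<in> Q" "q1 + x * t1 \<in> S" "q2 \<in> Q" "q2 + y * t2 \<in> S"
          using meet by blast
        have "(q1 + x * t1) * (q2 + y * t2) = q1 * (q2 + y * t2) + (q2 * (x * t1) + (x * y) * (t1 * t2))"
          by (simp add: algebra_simps)
        also have "\<dots> \<in> Q"
          by (rule idadd[OF Q(1) idmulr[OF Q(1) q(1)] idadd[OF Q(1) idmulr[OF Q(1) q(3)] idmulr[OF Q(1) xy]]])
        finally show False using Smul[OF q(2,4)] Q(2) by blast
      qed
    qed
    have propc: "1 \<notin> span2 Q c" if "\<And>t. 1 + c * t \<in> S" for c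
    proof
      assume "1 \<in> span2 Q c"
      then obtain q t where "1 = q + c * t" "q \<in> Q" unfolding span2_def by blast
      then have "q = 1 + c * (- t)" by (simp add: algebra_simps)
      then show False using that[of "-t"] \<open>q \<in> Q\<close> Q(2) by blast
    qed
    obtain M1 where M1: "maximal_ideal M1" "span2 Q a \<subseteq> M1"
      using exists_max[OF span2_ideal[OF Q(1)] propc[OF S1]] by blast
    obtain M2 where M2: "maximal_ideal M2" "span2 Q b \<subseteq> M2"
      using exists_max[OF span2_ideal[OF Q(1)] propc[OF S2]] by blast
    have "Q \<subseteq> M1" "Q \<subseteq> M2" using M1 M2 span2_sub[OF Q(1)] by blast+
    moreover have "\<exists>!M. maximal_ideal M \<and> Q \<subseteq> M" using pm \<open>prime_ideal Q\<close> unfolding pm_ring_def by blast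
    ultimately have "M1 = M2" using M1(1) M2(1) by blast
    moreover have "a \<in> M1" "b \<in> M2" using M1 M2 span2_a[OF Q(1)] by blast+
    ultimately have "a + b \<in> M1" using idadd[OF max_ideal[OF M1(1)]] by simp
    then show False using ab max_one[OF M1(1)] by simp
  qed
qed

lemma F_star_clean:
  assumes F: "feckly_clean_ring TYPE('a::comm_ring_1)"
    and st: "\<forall>a b::'a. a + b = 1 \<longrightarrow> (\<exists>r s. (1 + a * r) * (1 + b * s) = 0)"
  shows "clean_ring TYPE('a)"
  unfolding clean_ring_def
proof
  fix x :: 'a
  obtain e u where eu: "full u" "x = e + u" "{e * r * (1 - e) | r. True} \<subseteq> jacobson"
    using F unfolding feckly_clean_ring_def feckly_clean_elem_def by blast
  have "1 \<in> RuR u" using eu(1) by (simp add: full_def)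
  then obtain n r s where "1 = (\<Sum>i<(n::nat). r i * u * s i)" unfolding RuR_def by blast
  also have "\<dots> = u * (\<Sum>i<n. r i * s i)" by (simp add: sum_distrib_left mult_ac)
  finally have uu: "u dvd 1" by (metis dvd_triv_left)
  have ee: "e * (1 - e) \<in> M" if "maximal_ideal M" for M
  proof -
    have "e * 1 * (1 - e) \<in> jacobson" using eu(3) by blast
    then show ?thesis using that by (simp add: jac_iff)
  qed
  have "e + (1 - e) = 1" by simp
  then obtain r s where rs: "(1 + e * r) * (1 + (1 - e) * s) = 0" using st by blast
  define f where "f = 1 + e * r"
  define g where "g = 1 + (1 - e) * s"
  have fg: "f * g = 0" using rs by (simp add: f_def g_def)
  have cases: "(e \<in> M \<and> g \<in> M \<and> f \<notin> M) \<or> ((1 - e) \<in> M \<and> f \<in> M \<and> g \<notin> M)"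
    if M: "maximal_ideal M" for M
  proof -
    have I: "cr_ideal M" using M by (rule max_ideal)
    have n1: "1 \<notin> M" using M by (rule max_one)
    have fgM: "f \<in> M \<or> g \<in> M" using max_prime[OF M] fg id0[OF I] by simp
    have "e \<in> M \<or> 1 - e \<in> M" using max_prime[OF M ee[OF M]] .
    then show ?thesis
    proof
      assume e: "e \<in> M"
      have "f \<notin> M"
      proof
        assume "f \<in> M"
        then have "f - e * r \<in> M" using iddiff[OF I] idmulr[OF I e] by blast
        then show False using n1 by (simp add: f_def)
      qed
      then show ?thesis using e fgM by blast
    next
      assume e: "1 - e \<in> M"
      have "g \<notin> M"
      proof
        assume "g \<in> M"
        then have "g - (1 - e) * s \<in> M" using iddiff[OF I] idmulr[OF I e] by blast
        then show False using n1 by (simp add: g_def)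
      qed
      then show ?thesis using e fgM by blast
    qed
  qed
  have "(f + g) dvd 1"
  proof (rule unit_of_nomax)
    fix M :: "'a set" assume M: "maximal_ideal M"
    show "f + g \<notin> M"
    proof
      assume fgm: "f + g \<in> M"
      have I: "cr_ideal M" using M by (rule max_ideal)
      from cases[OF M] show False
      proof
        assume "e \<in> M \<and> g \<in> M \<and> f \<notin> M"
        then show False using iddiff[OF I fgm, of g] by simp
      next
        assume "1 - e \<in> M \<and> f \<in> M \<and> g \<notin> M"
        then show False using iddiff[OF I fgm, of f] by simp
      qed
    qed
  qed
  then obtain w where w: "1 = (f + g) * w" by (auto elim: dvdE)
  define E where "E = 1 - f * w"
  have Eid: "E * E = E"
  proof -
    have "f * w = f * w * ((f + g) * w)" using w by simp
    also have "\<dots> = (f * w) * (f * w) + (f * g) * (w * w)" by (simp add: algebra_simps)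
    finally have pp: "(f * w) * (f * w) = f * w" using fg by simp
    have "(1 - f * w) * (1 - f * w) = 1 - f * w - f * w + (f * w) * (f * w)"
      by (simp add: algebra_simps)
    then show ?thesis unfolding E_def using pp by simp
  qed
  have "(x - E) dvd 1"
  proof (rule unit_of_nomax)
    fix M :: "'a set" assume M: "maximal_ideal M"
    have I: "cr_ideal M" using M by (rule max_ideal)
    have uM: "u \<notin> M"
    proof
      assume "u \<in> M"
      obtain k where k: "1 = u * k" using uu by (auto elim: dvdE)
      have "u * k \<in> M" using idmulr[OF I \<open>u \<in> M\<close>] .
      then show False using k max_one[OF M] by simp
    qed
    have dM: "e - E \<in> M"
      using cases[OF M]
    proof
      assume h: "e \<in> M \<and> g \<in> M \<and> f \<notin> M"
      have "e - E = e - g * w" unfolding E_def using w by (simp add: algebra_simps)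
      then show ?thesis using h iddiff[OF I] idmulr[OF I] by metis
    next
      assume h: "1 - e \<in> M \<and> f \<in> M \<and> g \<notin> M"
      have "e - E = f * w - (1 - e)" unfolding E_def by (simp add: algebra_simps)
      then show ?thesis using h iddiff[OF I] idmulr[OF I] by metis
    qed
    show "x - E \<notin> M"
    proof
      assume "x - E \<in> M"
      then have "(x - E) - (e - E) \<in> M" using iddiff[OF I] dM by blast
      then show False using uM eu(2) by simp
    qed
  qed
  then show "\<exists>e u. e * e = e \<and> u dvd 1 \<and> x = e + u" using Eid
    by (intro exI[of _ E] exI[of _ "x - E"]) simp
qed

theorem theorem5p6:
  shows "(clean_ring TYPE('a::comm_ring_1) \<longleftrightarrow> feckly_clean_ring TYPE('a) \<and> pm_ring TYPE('a))
       \<and> (feckly_clean_ring TYPE('a) \<and> pm_ring TYPE('a) \<longleftrightarrow>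
          feckly_clean_ring TYPE('a) \<and>
          (\<forall>a b::'a. a + b = 1 \<longrightarrow> (\<exists>r s. (1 + a * r) * (1 + b * s) = 0)))"
  using clean_F[where 'a='a] clean_star[where 'a='a] star_pm[where 'a='a] pm_star[where 'a='a]
    F_star_clean[where 'a='a] by blast

end
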